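(* Let $\Sigma$ be a finite set and $n\geq 1$. Every nonempty subset $C\subseteq\Sigma^n$ satisfying property (A) has cardinality at least $2^n$.
   Context: A set $M\subseteq\Sigma^n$ satisfies property (A) if for every element $\bar x\in M$ and every position $i\in\{1,\dots,n\}$ there exists another element $\bar y\in M$, $\bar y\neq\bar x$, that differs from $\bar x$ only in position $i$. *)

theory Defs
  imports Main
begin

text \<open>Sigma^n is represented as lists of length n with entries in Sigma; positions are 0..n-1.\<close>

definition words :: "'a set \<Rightarrow> nat \<Rightarrow> 'a list set" where
  "words \<Sigma> n = {xs. length xs = n \<and> set xs \<subseteq> \<Sigma>}"

definition property_A :: "nat \<Rightarrow> 'a list set \<Rightarrow> bool" where
  "property_A n M \<longleftrightarrow>
     (\<forall>x\<in>M. \<forall>i<n. \<exists>y\<in>M. y \<noteq> x \<and> (\<forall>j<n. j \<noteq> i \<longrightarrow> y ! j = x ! j))"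

end

theory Submission
  imports Defs
begin

lemma main:
  "finite C \<Longrightarrow> C \<noteq> {} \<Longrightarrow> \<forall>x\<in>C. length x = n \<Longrightarrow> property_A n C \<Longrightarrow> 2^n \<le> card C"
proof (induction n arbitrary: C)
  case 0
  then show ?case by (simp add: Suc_le_eq card_gt_0_iff)
next
  case (Suc n)
  define Ca where "Ca a = {x\<in>C. hd x = a}" for a
  have sub: "Ca a \<subseteq> C" for a by (auto simp: Ca_def)
  have consx: "x = hd x # tl x" if "x \<in> C" for x
    using Suc.prems(3) that by (cases x) auto
  have injtl: "inj_on tl (Ca a)" for a
  proof (rule inj_onI)
    fix x y assume "x \<in> Ca a" "y \<in> Ca a" "tl x = tl y"
    then show "x = y" using consx[of x] consx[of y] by (auto simp: Ca_def)
  qed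
  have big: "2^n \<le> card (Ca (hd x))" if xC: "x \<in> C" for x
  proof -
    let ?T = "tl ` Ca (hd x)"
    have fin: "finite ?T" using Suc.prems(1) sub finite_subset by blast
    have ne: "?T \<noteq> {}" using xC by (auto simp: Ca_def)
    have len: "\<forall>t\<in>?T. length t = n" using Suc.prems(3) by (auto simp: Ca_def)
    have pA: "property_A n ?T"
      unfolding property_A_def
    proof (intro ballI allI impI)
      fix t i assume tT: "t \<in> ?T" and i: "i < n"
      then obtain z where zC: "z \<in> Ca (hd x)" and t: "t = tl z" by blast
      have "z \<in> C" using zC by (simp add: Ca_def)
      with Suc.prems(4) i obtain y where yC: "y \<in> C" and yz: "y \<noteq> z"
        and agr: "\<forall>j<Suc n. j \<noteq> Suc i \<longrightarrow> y ! j = z ! j"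
        unfolding property_A_def by (meson Suc_less_eq)
      have zc: "z = hd z # tl z" using consx \<open>z \<in> C\<close> by blast
      have yc: "y = hd y # tl y" using consx yC by blast
      have "y ! 0 = z ! 0" using agr by simp
      hence hy: "hd y = hd z" using zc yc by (metis nth_Cons_0)
      hence "y \<in> Ca (hd x)" using yC zC by (simp add: Ca_def)
      moreover have "tl y \<noteq> tl z" using hy yz zc yc by metis
      moreover have "\<forall>j<n. j \<noteq> i \<longrightarrow> tl y ! j = tl z ! j"
      proof (intro allI impI)
        fix j assume "j < n" "j \<noteq> i"
        then have "y ! Suc j = z ! Suc j" using agr by simp
        then show "tl y ! j = tl z ! j" using zc yc by (metis nth_Cons_Suc)
      qed
      ultimately show "\<exists>y\<in>?T. y \<noteq> t \<and> (\<forall>j<n. j \<noteq> i \<longrightarrow> y ! j = t ! j)"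
        using t by blast
    qed
    have "2^n \<le> card ?T" using Suc.IH[OF fin ne len pA] .
    also have "card ?T = card (Ca (hd x))" using card_image[OF injtl] .
    finally show ?thesis .
  qed
  obtain x where xC: "x \<in> C" using Suc.prems(2) by blast
  from Suc.prems(4) xC obtain y where yC: "y \<in> C" and yx: "y \<noteq> x"
    and agr: "\<forall>j<Suc n. j \<noteq> 0 \<longrightarrow> y ! j = x ! j"
    unfolding property_A_def by blast
  have xc: "x = hd x # tl x" using consx xC by blast
  have yc: "y = hd y # tl y" using consx yC by blast
  have lt: "length (tl x) = n" "length (tl y) = n" using Suc.prems(3) xC yC by auto
  have "tl y = tl x"
  proof (rule nth_equalityI)
    show "length (tl y) = length (tl x)" using lt by simp
    fix j assume "j < length (tl y)"
    then have "y ! Suc j = x ! Suc j" using agr lt by simp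
    then show "tl y ! j = tl x ! j" using xc yc by (metis nth_Cons_Suc)
  qed
  hence hne: "hd y \<noteq> hd x" using yx xc yc by metis
  have disj: "Ca (hd x) \<inter> Ca (hd y) = {}" using hne by (auto simp: Ca_def)
  have "2^Suc n \<le> card (Ca (hd x)) + card (Ca (hd y))" using big[OF xC] big[OF yC] by simp
  also have "\<dots> = card (Ca (hd x) \<union> Ca (hd y))"
    using card_Un_disjoint[OF finite_subset[OF sub Suc.prems(1)] finite_subset[OF sub Suc.prems(1)] disj] by simp
  also have "\<dots> \<le> card C" using sub Suc.prems(1) by (intro card_mono) auto
  finally show ?case .
qed

theorem proposition1:
  fixes \<Sigma> :: "'a set" and n :: nat and C :: "'a list set"
  assumes "finite \<Sigma>" and "n \<ge> 1"
    and "C \<subseteq> words \<Sigma> n" and "C \<noteq> {}"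
    and "property_A n C"
  shows "card C \<ge> 2 ^ n"
proof -
  have "finite (words \<Sigma> n)" unfolding words_def
    using finite_lists_length_eq[OF assms(1), of n] by (simp add: conj_commute)
  hence "finite C" using assms(3) finite_subset by blast
  moreover have "\<forall>x\<in>C. length x = n" using assms(3) by (auto simp: words_def)
  ultimately show ?thesis using main assms(4,5) by blast
qed

end
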